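(* Under the model and the disjoint threshold-based policy with threshold $P_S>0$ described in the context, the long-run transmission probability of $S$, $$\Psi_S=\lim_{n\to\infty}\frac1n\sum_{t=1}^n \mathbf{E}\big[\mathbf{1}_{B_S^t\ge P_S}\big],$$ exists and equals $$\Psi_S=\min\Big(1,\frac{\lambda_S}{P_S}\Big).$$
   Context: Time is slotted, $t=1,2,\dots$ (one slot = unit time, so energy and power are identified). The transmitter $S$ harvests energy $E_S^t\ge 0$ at the end of slot $t$; $\{E_S^t\}_t$ is a stationary and ergodic sequence with mean $\mathbf{E}[E_S^t]=\lambda_S>0$. The battery has infinite capacity; $B_S^t$ is the battery energy at the beginning of slot $t$, with $B_S^1=0$, and $B_S^{t+1}=B_S^t-P_S^t+E_S^t$, where $P_S^t$ is the energy consumed in slot $t$. Disjoint threshold-based policy with threshold $P_S>0$: $P_S^t=P_S$ if $B_S^t\ge P_S$ (then $S$ transmits), and $P_S^t=0$ otherwise. *)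

theory Defs
  imports "HOL-Probability.Probability"
begin

abbreviation path_space :: "(nat \<Rightarrow> real) measure" where
  "path_space \<equiv> PiM UNIV (\<lambda>_. borel)"

definition process_law :: "'a measure \<Rightarrow> (nat \<Rightarrow> 'a \<Rightarrow> real) \<Rightarrow> (nat \<Rightarrow> real) measure" where
  "process_law M X = distr M path_space (\<lambda>\<omega> t. X t \<omega>)"

definition path_shift :: "(nat \<Rightarrow> real) \<Rightarrow> (nat \<Rightarrow> real)" where
  "path_shift x = (\<lambda>t. x (Suc t))"

definition stationary_process :: "'a measure \<Rightarrow> (nat \<Rightarrow> 'a \<Rightarrow> real) \<Rightarrow> bool" where
  "stationary_process M X \<longleftrightarrow>
     (\<forall>t. X t \<in> borel_measurable M) \<and>
     distr M path_space (\<lambda>\<omega> t. X (Suc t) \<omega>) = process_law M X"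

definition ergodic_process :: "'a measure \<Rightarrow> (nat \<Rightarrow> 'a \<Rightarrow> real) \<Rightarrow> bool" where
  "ergodic_process M X \<longleftrightarrow>
     (\<forall>A \<in> sets path_space.
        path_shift -` A \<inter> space path_space = A \<longrightarrow>
        measure (process_law M X) A = 0 \<or> measure (process_law M X) A = 1)"

text \<open>Battery level at the beginning of slot t+1 (slot t+1 of the paper, indexing from 0)
  under the threshold policy with threshold P, driven by harvested energies Eh.\<close>
primrec battery :: "(nat \<Rightarrow> 'a \<Rightarrow> real) \<Rightarrow> real \<Rightarrow> nat \<Rightarrow> 'a \<Rightarrow> real" where
  "battery Eh P 0 \<omega> = 0"
| "battery Eh P (Suc t) \<omega> =
     battery Eh P t \<omega> - (if battery Eh P t \<omega> \<ge> P then P else 0) + Eh t \<omega>"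

end

theory Submission
  imports Defs
begin


lemma space_ps[simp]: "space path_space = UNIV"
  by (auto simp: space_PiM PiE_def extensional_def)

lemma shift_meas[measurable]: "path_shift \<in> measurable path_space path_space"
  unfolding path_shift_def by (rule measurable_PiM_single') auto

definition Tsum :: "real \<Rightarrow> nat \<Rightarrow> (nat \<Rightarrow> real) \<Rightarrow> real" where
  "Tsum P k x = (\<Sum>t<k. P - x t)"

fun Mx :: "real \<Rightarrow> nat \<Rightarrow> (nat \<Rightarrow> real) \<Rightarrow> real" where
  "Mx P 0 x = 0"
| "Mx P (Suc n) x = max (Mx P n x) (Tsum P (Suc n) x)"

definition bat :: "real \<Rightarrow> nat \<Rightarrow> (nat \<Rightarrow> real) \<Rightarrow> real" where
  "bat P t x = battery (\<lambda>t x. x t) P t x"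

lemma Tsum_meas[measurable]: "Tsum P k \<in> borel_measurable path_space"
  unfolding Tsum_def by measurable

lemma Mx_meas[measurable]: "Mx P n \<in> borel_measurable path_space"
  by (induction n) auto

lemma battery_meas[measurable]: "(\<lambda>x. battery (\<lambda>t x. x t) P t x) \<in> borel_measurable path_space"
  by (induction t) auto

lemma bat_meas[measurable]: "bat P t \<in> borel_measurable path_space"
  unfolding bat_def by measurable

locale shiftsys = prob_space Q for Q :: "(nat \<Rightarrow> real) measure" +
  fixes lam P :: real
  assumes sets_Q[measurable_cong]: "sets Q = sets path_space"
  and inv: "distr Q path_space path_shift = Q"
  and erg: "\<forall>A\<in>sets path_space. path_shift -` A \<inter> space path_space = A \<longrightarrow> measure Q A = 0 \<or> measure Q A = 1"
  and int0: "integrable Q (\<lambda>x. x 0)" and mean: "integral\<^sup>L Q (\<lambda>x. x 0) = lam"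
  and nonneg: "\<And>t. AE x in Q. 0 \<le> x t"
  and Ppos: "P > 0"
begin

lemma spaceQ[simp]: "space Q = UNIV"
  using sets_eq_imp_space_eq[OF sets_Q] by simp

lemma test: "Mx P n \<in> borel_measurable Q" by measurable

lemma shiftQ[measurable]: "path_shift \<in> measurable Q path_space"
  using measurable_cong_sets[OF sets_Q refl] by simp

lemma inv_integral:
  assumes [measurable]: "(f::(nat\<Rightarrow>real)\<Rightarrow>real) \<in> borel_measurable path_space"
  shows "integral\<^sup>L Q (\<lambda>x. f (path_shift x)) = integral\<^sup>L Q f"
proof -
  have "integral\<^sup>L Q f = integral\<^sup>L (distr Q path_space path_shift) f" using inv by simp
  also have "\<dots> = integral\<^sup>L Q (\<lambda>x. f (path_shift x))"
    by (rule integral_distr[OF shiftQ assms])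
  finally show ?thesis by simp
qed

lemma inv_integrable:
  assumes [measurable]: "(f::(nat\<Rightarrow>real)\<Rightarrow>real) \<in> borel_measurable path_space"
  shows "integrable Q (\<lambda>x. f (path_shift x)) \<longleftrightarrow> integrable Q f"
proof -
  have "integrable Q f = integrable (distr Q path_space path_shift) f" using inv by simp
  also have "\<dots> = integrable Q (\<lambda>x. f (path_shift x))"
    by (rule integrable_distr_eq[OF shiftQ assms])
  finally show ?thesis by simp
qed

lemma coord: "integrable Q (\<lambda>x. x t) \<and> integral\<^sup>L Q (\<lambda>x. x t) = lam"
proof (induction t)
  case 0 thus ?case using int0 mean by simp
next
  case (Suc t)
  show ?case using Suc inv_integral[of "\<lambda>y. y t"] inv_integrable[of "\<lambda>y. y t"]
    by (simp add: path_shift_def)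
qed

end


definition ind :: "real \<Rightarrow> nat \<Rightarrow> (nat \<Rightarrow> real) \<Rightarrow> real" where
  "ind P t x = (if P \<le> bat P t x then 1 else 0)"

lemma Tsum_Suc_shift: "Tsum P (Suc k) x = (P - x 0) + Tsum P k (path_shift x)"
  unfolding Tsum_def path_shift_def by (subst sum.lessThan_Suc_shift) simp

lemma Tsum_0[simp]: "Tsum P 0 x = 0" by (simp add: Tsum_def)

lemma Mx_mono: "Mx P n x \<le> Mx P (Suc n) x" by simp

lemma Mx_mono': "m \<le> n \<Longrightarrow> Mx P m x \<le> Mx P n x"
  by (induction n) (auto simp: le_Suc_eq intro: order.trans[OF _ Mx_mono])

lemma Mx_incseq: "incseq (\<lambda>n. Mx P n x)"
  by (simp add: incseq_def Mx_mono')

lemma T_le_Mx: "k \<le> n \<Longrightarrow> Tsum P k x \<le> Mx P n x"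
proof (induction n)
  case 0 thus ?case by simp
next
  case (Suc n) thus ?case by (auto simp: le_Suc_eq)
qed

lemma Mx_ge0: "0 \<le> Mx P n x"
  using T_le_Mx[of 0 n P x] by simp

lemma Mx_rec: "Mx P (Suc n) x = max 0 (P - x 0 + Mx P n (path_shift x))"
proof (induction n)
  case 0 thus ?case by (simp add: Tsum_Suc_shift)
next
  case (Suc n)
  have "Mx P (Suc (Suc n)) x = max (Mx P (Suc n) x) (Tsum P (Suc (Suc n)) x)" by simp
  also have "\<dots> = max (max 0 (P - x 0 + Mx P n (path_shift x))) (P - x 0 + Tsum P (Suc n) (path_shift x))"
    using Suc by (simp add: Tsum_Suc_shift[of P "Suc n"])
  also have "\<dots> = max 0 (P - x 0 + Mx P (Suc n) (path_shift x))"
    by (simp add: max_def)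
  finally show ?case .
qed

lemma Mx_bound: "Mx P n x \<le> (\<Sum>t<n. \<bar>P - x t\<bar>)"
proof (induction n)
  case 0 thus ?case by simp
next
  case (Suc n)
  have "Tsum P (Suc n) x \<le> (\<Sum>t<Suc n. \<bar>P - x t\<bar>)"
    unfolding Tsum_def by (rule sum_mono) auto
  moreover have "(\<Sum>t<n. \<bar>P - x t\<bar>) \<le> (\<Sum>t<Suc n. \<bar>P - x t\<bar>)" by simp
  ultimately show ?case using Suc by simp
qed

lemma bat_Suc: "bat P (Suc t) x = bat P t x - P * ind P t x + x t"
  by (simp add: bat_def ind_def)

lemma bat_0[simp]: "bat P 0 x = 0" by (simp add: bat_def)

lemma bat_sum: "bat P n x = (\<Sum>t<n. x t) - P * (\<Sum>t<n. ind P t x)"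
  by (induction n) (simp_all add: bat_Suc algebra_simps)

lemma lower_pw: "0 \<le> P \<Longrightarrow> P * (real n - (\<Sum>t<n. ind P t x)) \<le> 2 * P + Mx P n x"
proof (induction n)
  case 0 thus ?case by (simp add: Mx_ge0 add_nonneg_nonneg)
next
  case (Suc n)
  show ?case
  proof (cases "P \<le> bat P n x")
    case True
    then have "P * (real (Suc n) - (\<Sum>t<Suc n. ind P t x)) = P * (real n - (\<Sum>t<n. ind P t x))"
      by (simp add: ind_def algebra_simps)
    then show ?thesis using Suc(1)[OF Suc(2)] Mx_mono[of P n x] by linarith
  next
    case False
    then have "P * (real (Suc n) - (\<Sum>t<Suc n. ind P t x)) = P * (real n - (\<Sum>t<n. ind P t x)) + P"
      by (simp add: ind_def algebra_simps)
    also have "\<dots> = bat P n x + Tsum P n x + P"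
      by (simp add: bat_sum Tsum_def sum_subtractf algebra_simps)
    also have "\<dots> \<le> 2 * P + Mx P n x" using False T_le_Mx[of n n P x] by simp
    finally show ?thesis using Mx_mono[of P n x] by linarith
  qed
qed

lemma bat_nonneg: "(\<And>t. 0 \<le> x t) \<Longrightarrow> 0 \<le> bat P n x"
  by (induction n) (auto simp: bat_Suc ind_def add_nonneg_nonneg)



definition gfun :: "real \<Rightarrow> nat \<Rightarrow> (nat \<Rightarrow> real) \<Rightarrow> real" where
  "gfun P n x = max (P - x 0) (- Mx P n (path_shift x))"

lemma gfun_meas[measurable]: "gfun P n \<in> borel_measurable path_space"
  unfolding gfun_def by measurable

lemma gfun_abs: "\<bar>gfun P n x\<bar> \<le> \<bar>P - x 0\<bar>"
  using Mx_ge0[of P n "path_shift x"] unfolding gfun_def by linarith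

lemma gfun_mono: "gfun P (Suc n) x \<le> gfun P n x"
  using Mx_mono[of P n "path_shift x"] unfolding gfun_def by linarith

lemma Mx_gfun: "Mx P (Suc n) x = gfun P n x + Mx P n (path_shift x)"
  unfolding Mx_rec gfun_def by linarith

context shiftsys begin

lemma int_coord[simp, intro]: "integrable Q (\<lambda>x. x t)" using coord by blast
lemma int_coord_val: "integral\<^sup>L Q (\<lambda>x. x t) = lam" using coord by blast

lemma int_Z[simp, intro]: "integrable Q (\<lambda>x. P - x t)"
  by (intro Bochner_Integration.integrable_diff) auto

lemma int_Mx[simp, intro]: "integrable Q (Mx P n)"
proof (rule Bochner_Integration.integrable_bound[of _ "\<lambda>x. \<Sum>t<n. \<bar>P - x t\<bar>"])
  show "integrable Q (\<lambda>x. \<Sum>t<n. \<bar>P - x t\<bar>)" by (intro Bochner_Integration.integrable_sum) auto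
  show "Mx P n \<in> borel_measurable Q" by measurable
  show "AE x in Q. norm (Mx P n x) \<le> norm (\<Sum>t<n. \<bar>P - x t\<bar>)"
    using Mx_bound[of P n] Mx_ge0[of P n] by (auto intro!: AE_I2 simp: abs_le_iff)
qed

lemma int_gfun[simp, intro]: "integrable Q (gfun P n)"
proof (rule Bochner_Integration.integrable_bound[of _ "\<lambda>x. P - x 0"])
  show "gfun P n \<in> borel_measurable Q" by measurable
qed (auto intro!: AE_I2 simp: gfun_abs)

definition d :: "nat \<Rightarrow> real" where "d n = integral\<^sup>L Q (gfun P n)"

lemma int_Mx_shift: "integrable Q (\<lambda>x. Mx P n (path_shift x))"
  using inv_integrable[of "Mx P n"] by simp

lemma EMx_Suc: "integral\<^sup>L Q (Mx P (Suc n)) = integral\<^sup>L Q (Mx P n) + d n"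
proof -
  have "integral\<^sup>L Q (Mx P (Suc n)) = integral\<^sup>L Q (\<lambda>x. gfun P n x + Mx P n (path_shift x))"
    by (simp add: Mx_gfun[abs_def])
  also have "\<dots> = d n + integral\<^sup>L Q (\<lambda>x. Mx P n (path_shift x))"
    unfolding d_def by (rule Bochner_Integration.integral_add) (auto simp: int_Mx_shift)
  also have "\<dots> = d n + integral\<^sup>L Q (Mx P n)" by (simp add: inv_integral)
  finally show ?thesis by simp
qed

lemma d_mono: "d (Suc n) \<le> d n"
  unfolding d_def by (rule integral_mono) (auto simp: gfun_mono)

lemma d_mono': "m \<le> n \<Longrightarrow> d n \<le> d m"
  using d_mono by (metis antimonoD antimono_iff_le_Suc)

lemma EMx_le: "m \<le> n \<Longrightarrow> integral\<^sup>L Q (Mx P n) \<le> integral\<^sup>L Q (Mx P m) + real (n - m) * d m"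
proof (induction n)
  case 0 thus ?case by simp
next
  case (Suc n)
  show ?case
  proof (cases "m = Suc n")
    case True thus ?thesis by simp
  next
    case False
    with Suc have mn: "m \<le> n" by simp
    have "integral\<^sup>L Q (Mx P (Suc n)) = integral\<^sup>L Q (Mx P n) + d n" by (rule EMx_Suc)
    also have "\<dots> \<le> integral\<^sup>L Q (Mx P m) + real (n - m) * d m + d m"
      using Suc(1)[OF mn] d_mono'[OF mn] by simp
    also have "\<dots> = integral\<^sup>L Q (Mx P m) + real (Suc n - m) * d m"
      using mn by (simp add: Suc_diff_le algebra_simps)
    finally show ?thesis .
  qed
qed

end


definition Aset :: "real \<Rightarrow> (nat \<Rightarrow> real) set" where
  "Aset P = {x. \<exists>C::nat. \<forall>n. Mx P n x \<le> real C}"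

lemma Aset_iff: "x \<in> Aset P \<longleftrightarrow> (\<exists>C::real. \<forall>n. Mx P n x \<le> C)"
proof
  assume "x \<in> Aset P" then show "\<exists>C::real. \<forall>n. Mx P n x \<le> C" unfolding Aset_def by blast
next
  assume "\<exists>C::real. \<forall>n. Mx P n x \<le> C"
  then obtain C :: real where C: "\<And>n. Mx P n x \<le> C" by blast
  have "C \<le> real (nat \<lceil>C\<rceil>)" by (rule real_nat_ceiling_ge)
  then have "\<forall>n. Mx P n x \<le> real (nat \<lceil>C\<rceil>)" using C order_trans by blast
  then show "x \<in> Aset P" unfolding Aset_def by blast
qed

lemma Aset_sets: "Aset P \<in> sets path_space"
proof -
  have "{x \<in> space path_space. \<exists>C::nat. \<forall>n. Mx P n x \<le> real C} \<in> sets path_space"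
    by measurable
  then show ?thesis by (simp add: Aset_def)
qed

lemma Aset_shift: "path_shift x \<in> Aset P \<longleftrightarrow> x \<in> Aset P"
proof
  assume "path_shift x \<in> Aset P"
  then obtain C where C: "\<And>n. Mx P n (path_shift x) \<le> C" by (auto simp: Aset_iff)
  have "Mx P n x \<le> max 0 (P - x 0 + C)" for n
  proof (cases n)
    case 0 thus ?thesis by simp
  next
    case (Suc m)
    have "Mx P n x = max 0 (P - x 0 + Mx P m (path_shift x))" unfolding Suc by (rule Mx_rec)
    thus ?thesis using C[of m] by (auto simp: max_def)
  qed
  then show "x \<in> Aset P" by (auto simp: Aset_iff)
next
  assume "x \<in> Aset P"
  then obtain C where C: "\<And>n. Mx P n x \<le> C" by (auto simp: Aset_iff)
  have "Mx P n (path_shift x) \<le> C - (P - x 0)" for n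
    using C[of "Suc n"] Mx_rec[of P n x] by (auto simp: max_def split: if_splits)
  then show "path_shift x \<in> Aset P" by (auto simp: Aset_iff)
qed

lemma Aset_inv: "path_shift -` Aset P \<inter> space path_space = Aset P"
  using Aset_shift by auto

definition Minf :: "real \<Rightarrow> (nat \<Rightarrow> real) \<Rightarrow> real" where
  "Minf P x = (SUP n. (if x \<in> Aset P then Mx P n x else 0))"

lemma bdd_F: "bdd_above (range (\<lambda>n. if x \<in> Aset P then Mx P n x else 0))"
proof (cases "x \<in> Aset P")
  case True
  then obtain C where "\<And>n. Mx P n x \<le> C" by (auto simp: Aset_iff)
  then show ?thesis using True by (auto intro!: bdd_aboveI[of _ C])
qed simp

lemma Minf_meas[measurable]: "Minf P \<in> borel_measurable path_space"
proof -
  have [measurable]: "Aset P \<in> sets path_space" by (rule Aset_sets)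
  show ?thesis unfolding Minf_def
    by (rule borel_measurable_cSUP[OF _ _ bdd_F]) auto
qed

lemma Minf_ge0: "0 \<le> Minf P x"
proof -
  have "(if x \<in> Aset P then Mx P 0 x else 0) \<le> Minf P x"
    unfolding Minf_def by (rule cSUP_upper[OF _ bdd_F]) simp
  then show ?thesis by (simp split: if_splits)
qed

lemma Mx_lim: "x \<in> Aset P \<Longrightarrow> (\<lambda>n. Mx P n x) \<longlonglongrightarrow> Minf P x"
proof -
  assume x: "x \<in> Aset P"
  have "(\<lambda>n. if x \<in> Aset P then Mx P n x else 0) \<longlonglongrightarrow> Minf P x"
    unfolding Minf_def by (rule LIMSEQ_incseq_SUP[OF bdd_F]) (use x Mx_incseq in auto)
  then show ?thesis using x by simp
qed

lemma Minf_rec: "x \<in> Aset P \<Longrightarrow> Minf P x = max 0 (P - x 0 + Minf P (path_shift x))"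
proof -
  assume x: "x \<in> Aset P"
  then have xs: "path_shift x \<in> Aset P" by (simp add: Aset_shift)
  have "(\<lambda>n. Mx P (Suc n) x) \<longlonglongrightarrow> Minf P x" using Mx_lim[OF x] by (rule LIMSEQ_Suc)
  moreover have "(\<lambda>n. Mx P (Suc n) x) \<longlonglongrightarrow> max 0 (P - x 0 + Minf P (path_shift x))"
    unfolding Mx_rec by (intro tendsto_intros Mx_lim xs)
  ultimately show ?thesis by (rule LIMSEQ_unique)
qed



context shiftsys begin

lemma Aset_meas[measurable]: "Aset P \<in> sets Q"
  using Aset_sets sets_Q by simp

lemma d_lim: "\<exists>L. d \<longlonglongrightarrow> L \<and> L \<le> max 0 (P - lam)"
proof -
  have "measure Q (Aset P) = 0 \<or> measure Q (Aset P) = 1"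
    using erg[rule_format, OF Aset_sets Aset_inv] .
  then show ?thesis
  proof
    assume A0: "measure Q (Aset P) = 0"
    have "Aset P \<in> null_sets Q"
      using A0 by (intro null_setsI) (auto simp: emeasure_eq_measure)
    then have ae: "AE x in Q. x \<notin> Aset P" by (rule AE_not_in)
    have "d \<longlonglongrightarrow> integral\<^sup>L Q (\<lambda>x. P - x 0)"
      unfolding d_def
    proof (rule integral_dominated_convergence[where w="\<lambda>x. \<bar>P - x 0\<bar>"])
      show "(\<lambda>x. P - x 0) \<in> borel_measurable Q" by measurable
      show "gfun P i \<in> borel_measurable Q" for i by measurable
      show "integrable Q (\<lambda>x. \<bar>P - x 0\<bar>)" by (rule integrable_abs) simp
      show "AE x in Q. norm (gfun P i x) \<le> \<bar>P - x 0\<bar>" for i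
        by (auto intro!: AE_I2 simp: gfun_abs)
      show "AE x in Q. (\<lambda>i. gfun P i x) \<longlonglongrightarrow> P - x 0"
        using ae
      proof eventually_elim
        case (elim x)
        then have "path_shift x \<notin> Aset P" by (simp add: Aset_shift)
        then obtain n0 where n0: "Mx P n0 (path_shift x) > x 0 - P"
          by (auto simp: Aset_iff not_le) 
        have "eventually (\<lambda>n. gfun P n x = P - x 0) sequentially"
          unfolding eventually_sequentially
        proof (intro exI[of _ n0] allI impI)
          fix n assume "n0 \<le> n"
          then have "Mx P n0 (path_shift x) \<le> Mx P n (path_shift x)" by (rule Mx_mono')
          then show "gfun P n x = P - x 0" using n0 unfolding gfun_def by simp
        qed
        then show ?case by (rule tendsto_eventually)
      qed
    qed
    moreover have "integral\<^sup>L Q (\<lambda>x. P - x 0) = P - lam"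
      using prob_space by (simp add: Bochner_Integration.integral_diff int_coord_val)
    ultimately show ?thesis by auto
  next
    assume A1: "measure Q (Aset P) = 1"
    have "measure Q (space Q - Aset P) = 0" using A1 prob_compl[OF Aset_meas] by simp
    moreover have "space Q - Aset P \<in> sets Q" using Aset_meas by blast
    ultimately have "space Q - Aset P \<in> null_sets Q"
      by (intro null_setsI) (auto simp: emeasure_eq_measure)
    from AE_not_in[OF this] have ae: "AE x in Q. x \<in> Aset P" by simp
    define ginf where "ginf x = max (P - x 0) (- Minf P (path_shift x))" for x
    have ginf_meas[measurable]: "ginf \<in> borel_measurable Q" unfolding ginf_def by measurable
    have ginf_abs: "\<bar>ginf x\<bar> \<le> \<bar>P - x 0\<bar>" for x
      using Minf_ge0[of P "path_shift x"] unfolding ginf_def by linarith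
    have ginf_eq: "ginf x = Minf P x - Minf P (path_shift x)" if "x \<in> Aset P" for x
      using Minf_rec[OF that] unfolding ginf_def by linarith
    have dl: "d \<longlonglongrightarrow> integral\<^sup>L Q ginf"
      unfolding d_def
    proof (rule integral_dominated_convergence[where w="\<lambda>x. \<bar>P - x 0\<bar>"])
      show "gfun P i \<in> borel_measurable Q" for i by measurable
      show "integrable Q (\<lambda>x. \<bar>P - x 0\<bar>)" by (rule integrable_abs) simp
      show "AE x in Q. norm (gfun P i x) \<le> \<bar>P - x 0\<bar>" for i
        by (auto intro!: AE_I2 simp: gfun_abs)
      show "AE x in Q. (\<lambda>i. gfun P i x) \<longlonglongrightarrow> ginf x"
        using ae
      proof eventually_elim
        case (elim x)
        then have "path_shift x \<in> Aset P" by (simp add: Aset_shift)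
        then show ?case unfolding gfun_def ginf_def
          by (intro tendsto_intros Mx_lim)
      qed
    qed (rule ginf_meas)
    define h where "h c x = min (Minf P x) (real c) - min (Minf P (path_shift x)) (real c)" for c :: nat and x
    have hm[measurable]: "h c \<in> borel_measurable Q" for c unfolding h_def by measurable
    have h0: "integral\<^sup>L Q (h c) = 0" for c
    proof -
      have im: "(\<lambda>x. min (Minf P x) (real c)) \<in> borel_measurable path_space" by measurable
      have ii: "integrable Q (\<lambda>x. min (Minf P x) (real c))"
        by (rule Bochner_Integration.integrable_bound[of _ "\<lambda>_. real c"])
           (auto intro!: AE_I2 simp: Minf_ge0)
      have "integral\<^sup>L Q (h c) = integral\<^sup>L Q (\<lambda>x. min (Minf P x) (real c)) -
          integral\<^sup>L Q (\<lambda>x. min (Minf P (path_shift x)) (real c))"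
        unfolding h_def
        by (rule Bochner_Integration.integral_diff[OF ii]) (use inv_integrable[OF im] ii in simp)
      also have "\<dots> = 0" using inv_integral[OF im] by simp
      finally show ?thesis .
    qed
    have "(\<lambda>c. integral\<^sup>L Q (h c)) \<longlonglongrightarrow> integral\<^sup>L Q ginf"
    proof (rule integral_dominated_convergence[where w="\<lambda>x. \<bar>P - x 0\<bar>"])
      show "integrable Q (\<lambda>x. \<bar>P - x 0\<bar>)" by (rule integrable_abs) simp
      show "AE x in Q. norm (h c x) \<le> \<bar>P - x 0\<bar>" for c
        using ae
      proof eventually_elim
        case (elim x)
        have "\<bar>h c x\<bar> \<le> \<bar>Minf P x - Minf P (path_shift x)\<bar>"
          unfolding h_def by linarith
        then show ?case using ginf_eq[OF elim] ginf_abs[of x] by simp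
      qed
      show "AE x in Q. (\<lambda>c. h c x) \<longlonglongrightarrow> ginf x"
        using ae
      proof eventually_elim
        case (elim x)
        obtain N :: nat where N: "max (Minf P x) (Minf P (path_shift x)) \<le> real N"
          using real_nat_ceiling_ge by blast
        have "eventually (\<lambda>c. h c x = ginf x) sequentially"
          unfolding eventually_sequentially
        proof (intro exI[of _ N] allI impI)
          fix c assume "N \<le> c"
          then have "real N \<le> real c" by simp
          then show "h c x = ginf x" using N ginf_eq[OF elim] unfolding h_def by simp
        qed
        then show ?case by (rule tendsto_eventually)
      qed
    qed (rule ginf_meas, rule hm)
    then have "integral\<^sup>L Q ginf = 0" using h0 by (simp add: LIMSEQ_const_iff)
    then show ?thesis using dl by auto
  qed
qed

end


lemma ind_meas[measurable]: "ind P t \<in> borel_measurable path_space"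
  unfolding ind_def by measurable

context shiftsys begin

lemma int_ind[simp, intro]: "integrable Q (ind P t)"
  by (rule Bochner_Integration.integrable_bound[of _ "\<lambda>_. 1::real"])
     (auto intro!: AE_I2 simp: ind_def)

definition a :: "nat \<Rightarrow> real" where
  "a n = (\<Sum>t<n. measure Q {x \<in> space Q. P \<le> bat P t x})"

lemma a_int: "a n = integral\<^sup>L Q (\<lambda>x. \<Sum>t<n. ind P t x)"
proof -
  have "integral\<^sup>L Q (ind P t) = measure Q {x \<in> space Q. P \<le> bat P t x}" for t
  proof -
    have "ind P t = indicator {x. P \<le> bat P t x}"
      by (auto simp: ind_def indicator_def)
    then show ?thesis by simp
  qed
  then show ?thesis unfolding a_def
    by (subst Bochner_Integration.integral_sum) auto
qed

lemma a_le_n: "a n \<le> real n"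
proof -
  have "a n \<le> (\<Sum>t<n. 1)" unfolding a_def by (rule sum_mono) simp
  then show ?thesis by simp
qed

lemma a_le_lam: "P * a n \<le> real n * lam"
proof -
  have ae: "AE x in Q. \<forall>t. 0 \<le> x t" using nonneg by (simp add: AE_all_countable)
  have "P * a n = integral\<^sup>L Q (\<lambda>x. P * (\<Sum>t<n. ind P t x))" by (simp add: a_int)
  also have "\<dots> \<le> integral\<^sup>L Q (\<lambda>x. \<Sum>t<n. x t)"
  proof (rule integral_mono_AE)
    show "integrable Q (\<lambda>x. P * (\<Sum>t<n. ind P t x))" by (intro integrable_mult_right Bochner_Integration.integrable_sum) auto
    show "integrable Q (\<lambda>x. \<Sum>t<n. x t)" by (intro Bochner_Integration.integrable_sum) auto
    show "AE x in Q. P * (\<Sum>t<n. ind P t x) \<le> (\<Sum>t<n. x t)"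
      using ae
    proof eventually_elim
      case (elim x)
      have "0 \<le> bat P n x" by (rule bat_nonneg) (use elim in auto)
      then show ?case by (simp add: bat_sum)
    qed
  qed
  also have "\<dots> = real n * lam"
    by (subst Bochner_Integration.integral_sum) (auto simp: int_coord_val)
  finally show ?thesis .
qed

lemma a_lower: "P * (real n - a n) \<le> 2 * P + integral\<^sup>L Q (Mx P n)"
proof -
  have "P * (real n - a n) = integral\<^sup>L Q (\<lambda>x. P * (real n - (\<Sum>t<n. ind P t x)))"
    using prob_space
    by (simp add: a_int Bochner_Integration.integral_diff Bochner_Integration.integrable_sum algebra_simps)
  also have "\<dots> \<le> integral\<^sup>L Q (\<lambda>x. 2 * P + Mx P n x)"
  proof (rule integral_mono)
    show "integrable Q (\<lambda>x. P * (real n - (\<Sum>t<n. ind P t x)))"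
      by (intro integrable_mult_right Bochner_Integration.integrable_diff Bochner_Integration.integrable_sum) auto
    show "integrable Q (\<lambda>x. 2 * P + Mx P n x)"
      by (intro Bochner_Integration.integrable_add) auto
  qed (rule lower_pw, use Ppos in simp)
  also have "\<dots> = 2 * P + integral\<^sup>L Q (Mx P n)"
    using prob_space by (simp add: Bochner_Integration.integral_add)
  finally show ?thesis .
qed

lemma main_Q: "(\<lambda>n. a n / real n) \<longlonglongrightarrow> min 1 (lam / P)"
proof (rule LIMSEQ_I)
  fix r :: real assume r: "0 < r"
  define c where "c = min 1 (lam / P)"
  define mu where "mu = max 0 (P - lam)"
  have Pc: "P * c = P - mu" using Ppos unfolding c_def mu_def
    by (auto simp: min_def max_def field_simps)
  obtain L where L: "d \<longlonglongrightarrow> L" "L \<le> mu" using d_lim unfolding mu_def by blast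
  define eps where "eps = P * r / 2"
  have eps: "eps > 0" using Ppos r by (simp add: eps_def)
  then obtain m where m: "\<forall>n\<ge>m. dist (d n) L < eps"
    using L(1) unfolding LIMSEQ_def by blast
  then have dm: "d m \<le> mu + eps" using L(2) by (auto simp: dist_real_def)
  define K where "K = 2 * P + integral\<^sup>L Q (Mx P m)"
  obtain N :: nat where N: "2 * K / (P * r) < real N"
    using reals_Archimedean2 by blast
  show "\<exists>no. \<forall>n\<ge>no. norm (a n / real n - min 1 (lam / P)) < r"
  proof (intro exI[of _ "max 1 (max m N)"] allI impI)
    fix n assume n: "max 1 (max m N) \<le> n"
    then have n1: "real n \<ge> 1" and nm: "m \<le> n" and nN: "real N \<le> real n" by auto
    have up: "a n \<le> real n * c"
    proof -
      have "a n \<le> real n" by (rule a_le_n)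
      moreover have "a n \<le> real n * (lam / P)" using a_le_lam[of n] Ppos
        by (simp add: field_simps)
      ultimately show ?thesis unfolding c_def by (simp add: min_def)
    qed
    have "integral\<^sup>L Q (Mx P n) \<le> integral\<^sup>L Q (Mx P m) + real (n - m) * d m"
      by (rule EMx_le[OF nm])
    also have "\<dots> \<le> integral\<^sup>L Q (Mx P m) + real n * (mu + eps)"
    proof -
      have "real (n - m) * d m \<le> real (n - m) * (mu + eps)"
        by (rule mult_left_mono[OF dm]) simp
      also have "\<dots> \<le> real n * (mu + eps)"
        using nm eps by (intro mult_right_mono) (auto simp: mu_def)
      finally show ?thesis by simp
    qed
    finally have EM: "integral\<^sup>L Q (Mx P n) \<le> integral\<^sup>L Q (Mx P m) + real n * (mu + eps)" .
    have lowP: "P * (real n * c) - P * a n \<le> K + real n * eps"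
    proof -
      have "P * (real n * c) = real n * (P - mu)" using Pc by (metis mult.left_commute)
      then show ?thesis using a_lower[of n] EM unfolding K_def by (simp add: algebra_simps)
    qed
    have KN: "K < real n * (P * r) / 2"
    proof -
      have "2 * K / (P * r) < real n" using N nN by linarith
      then show ?thesis using Ppos r by (simp add: field_simps)
    qed
    have "P * (real n * c - a n) < P * (real n * r)"
      using lowP KN unfolding eps_def by (simp add: algebra_simps)
    then have lo: "real n * c - a n < real n * r" using Ppos by simp
    have "\<bar>a n / real n - c\<bar> = \<bar>a n - real n * c\<bar> / real n"
      using n1 by (simp add: field_simps)
    also have "\<dots> < r" using up lo n1 by (simp add: field_simps)
    finally show "norm (a n / real n - min 1 (lam / P)) < r" by (simp add: c_def)
  qed
qed

end


lemma bat_X: "bat P t (\<lambda>t. E t \<omega>) = battery E P t \<omega>"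
  by (induction t) (simp_all add: bat_def)

theorem lemma1:
  fixes M :: "'a measure" and E :: "nat \<Rightarrow> 'a \<Rightarrow> real" and lam P :: real
  assumes "prob_space M"
    and "stationary_process M E"
    and "ergodic_process M E"
    and "\<And>t \<omega>. \<omega> \<in> space M \<Longrightarrow> E t \<omega> \<ge> 0"
    and "integrable M (E 0)"
    and "(\<integral>\<omega>. E 0 \<omega> \<partial>M) = lam"
    and "lam > 0"
    and "P > 0"
  shows "(\<lambda>n. (\<Sum>t<n. measure M {\<omega> \<in> space M. battery E P t \<omega> \<ge> P}) / real n)
           \<longlonglongrightarrow> min 1 (lam / P)"
proof -
  interpret M: prob_space M by fact
  have Em[measurable]: "E t \<in> borel_measurable M" for t
    using assms(2) unfolding stationary_process_def by blast
  have X[measurable]: "(\<lambda>\<omega> t. E t \<omega>) \<in> measurable M path_space"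
    by (rule measurable_PiM_single') auto
  define Q where "Q = process_law M E"
  have Qd: "Q = distr M path_space (\<lambda>\<omega> t. E t \<omega>)" unfolding Q_def process_law_def ..
  have sQ: "sets Q = sets path_space" unfolding Qd by simp
  have pQ: "prob_space Q" unfolding Qd by (rule M.prob_space_distr[OF X])
  have XS[measurable]: "(\<lambda>\<omega> t. E (Suc t) \<omega>) \<in> measurable M path_space"
    by (rule measurable_PiM_single') auto
  have inv: "distr Q path_space path_shift = Q"
  proof -
    have "distr Q path_space path_shift = distr M path_space (\<lambda>\<omega>. path_shift (\<lambda>t. E t \<omega>))"
      unfolding Qd by (simp add: distr_distr[OF shift_meas X] comp_def)
    also have "\<dots> = distr M path_space (\<lambda>\<omega> t. E (Suc t) \<omega>)"
      by (simp add: path_shift_def)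
    also have "\<dots> = Q" using assms(2) unfolding stationary_process_def Q_def by simp
    finally show ?thesis .
  qed
  have erg: "\<forall>A\<in>sets path_space. path_shift -` A \<inter> space path_space = A \<longrightarrow> measure Q A = 0 \<or> measure Q A = 1"
    using assms(3) unfolding ergodic_process_def Q_def by blast
  have c0m: "(\<lambda>x::nat\<Rightarrow>real. x 0) \<in> borel_measurable path_space" by measurable
  have int0: "integrable Q (\<lambda>x. x 0)"
    unfolding Qd using integrable_distr_eq[OF X c0m] assms(5) by simp
  have mean: "integral\<^sup>L Q (\<lambda>x. x 0) = lam"
    unfolding Qd using integral_distr[OF X c0m] assms(6) by simp
  have nonneg: "AE x in Q. 0 \<le> x t" for t
  proof -
    have "{x \<in> space path_space. 0 \<le> x t} \<in> sets path_space" by measurable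
    then have "(AE x in Q. 0 \<le> x t) \<longleftrightarrow> (AE \<omega> in M. 0 \<le> E t \<omega>)"
      unfolding Qd by (rule AE_distr_iff[OF X])
    then show ?thesis using assms(4) by (auto intro!: AE_I2)
  qed
  interpret S: shiftsys Q lam P
    by (rule shiftsys.intro[OF pQ shiftsys_axioms.intro[OF sQ inv erg int0 mean nonneg assms(8)]])
  have eq: "measure Q {x \<in> space Q. P \<le> bat P t x} = measure M {\<omega> \<in> space M. battery E P t \<omega> \<ge> P}" for t
  proof -
    have h: "{x \<in> space path_space. P \<le> bat P t x} \<in> sets path_space" by measurable
    have "{x \<in> space Q. P \<le> bat P t x} \<in> sets path_space" using h by simp
    then have "measure Q {x \<in> space Q. P \<le> bat P t x} =
        measure M ((\<lambda>\<omega> t. E t \<omega>) -` {x \<in> space Q. P \<le> bat P t x} \<inter> space M)"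
      unfolding Qd by (rule measure_distr[OF X])
    also have "(\<lambda>\<omega> t. E t \<omega>) -` {x \<in> space Q. P \<le> bat P t x} \<inter> space M = {\<omega> \<in> space M. battery E P t \<omega> \<ge> P}"
      by (auto simp: bat_X)
    finally show ?thesis .
  qed
  show ?thesis using S.main_Q unfolding S.a_def eq .
qed


end
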